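(* Let $\mu$ be a singular cardinal with $\operatorname{cf}(\mu)=\theta$, and suppose $\mathfrak{d}^*_\mu=\kappa$. Then $\mathfrak{d}_\mu=\kappa$.
   Context: For $f,g\in{}^\mu\mu$, $f\le^* g$ means $|\{\beta<\mu:f(\beta)>g(\beta)\}|<\mu$ (size less than $\mu$, not merely bounded), and $\mathfrak{d}_\mu$ is the minimal cardinality of a family $\mathcal{D}\subseteq{}^\mu\mu$ such that every $f\in{}^\mu\mu$ is $\le^*$ some member of $\mathcal{D}$. For $f,g\in{}^\mu\theta$, $f<^* g$ means $|\{\beta<\mu:f(\beta)\ge g(\beta)\}|<\mu$, and $\mathfrak{d}^*_\mu$ is the minimal cardinality of a family $\mathcal{D}\subseteq{}^\mu\theta$ such that every $f\in{}^\mu\theta$ is $<^*$ some member of $\mathcal{D}$. *)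

theory Defs
  imports Main
begin

unbundle cardinal_syntax

text \<open>A cardinal mu is represented by a type 'm together with a cardinal
  well-order r on UNIV (card_order r); elements of 'm are the ordinals below mu,
  ordered by r.  Likewise theta = cf(mu) is a type 'c with a card_order t.\<close>

definition singular_card :: "'a rel \<Rightarrow> bool" where
  "singular_card r \<equiv> Cinfinite r \<and> \<not> regularCard r"

definition is_cof :: "'a rel \<Rightarrow> 'c rel \<Rightarrow> bool" where
  "is_cof r t \<equiv> (\<exists>K. K \<subseteq> Field r \<and> cofinal K r \<and> |K| =o t)
     \<and> (\<forall>K. K \<subseteq> Field r \<and> cofinal K r \<longrightarrow> t \<le>o |K| )"

definition le_star :: "'m rel \<Rightarrow> ('m \<Rightarrow> 'm) \<Rightarrow> ('m \<Rightarrow> 'm) \<Rightarrow> bool" where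
  "le_star r f g \<equiv> |{\<beta>. (g \<beta>, f \<beta>) \<in> r \<and> g \<beta> \<noteq> f \<beta>}| <o r"

definition less_star :: "'m rel \<Rightarrow> 'c rel \<Rightarrow> ('m \<Rightarrow> 'c) \<Rightarrow> ('m \<Rightarrow> 'c) \<Rightarrow> bool" where
  "less_star r t f g \<equiv> |{\<beta>. (g \<beta>, f \<beta>) \<in> t}| <o r"

definition dominating :: "'m rel \<Rightarrow> ('m \<Rightarrow> 'm) set \<Rightarrow> bool" where
  "dominating r D \<equiv> \<forall>f. \<exists>g\<in>D. le_star r f g"

definition dominating_star :: "'m rel \<Rightarrow> 'c rel \<Rightarrow> ('m \<Rightarrow> 'c) set \<Rightarrow> bool" where
  "dominating_star r t D \<equiv> \<forall>f. \<exists>g\<in>D. less_star r t f g"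

definition dmu_eq :: "'m rel \<Rightarrow> 'k rel \<Rightarrow> bool" where
  "dmu_eq r \<kappa> \<equiv> (\<exists>D. dominating r D \<and> |D| =o \<kappa>)
     \<and> (\<forall>D. dominating r D \<longrightarrow> \<kappa> \<le>o |D| )"

definition dmu_star_eq :: "'m rel \<Rightarrow> 'c rel \<Rightarrow> 'k rel \<Rightarrow> bool" where
  "dmu_star_eq r t \<kappa> \<equiv> (\<exists>D. dominating_star r t D \<and> |D| =o \<kappa>)
     \<and> (\<forall>D. dominating_star r t D \<longrightarrow> \<kappa> \<le>o |D| )"

end

theory Submission
  imports Defs
begin

lemma co_props:
  assumes "card_order (r :: 'a rel)"
  shows "(x,x) \<in> r" "(x,y) \<in> r \<or> (y,x) \<in> r"
    "(x,y) \<in> r \<Longrightarrow> (y,x) \<in> r \<Longrightarrow> x = y"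
    "(x,y) \<in> r \<Longrightarrow> (y,z) \<in> r \<Longrightarrow> (x,z) \<in> r"
proof -
  have w: "well_order_on UNIV r" using assms card_order_on_well_order_on by blast
  hence "linear_order_on UNIV r" unfolding well_order_on_def by blast
  hence l: "refl_on UNIV r" "total_on UNIV r" "antisym r" "trans r"
    unfolding linear_order_on_def partial_order_on_def preorder_on_def by blast+
  show "(x,x) \<in> r" using l(1) unfolding refl_on_def by blast
  show "(x,y) \<in> r \<or> (y,x) \<in> r" using l(1,2) unfolding total_on_def refl_on_def by (cases "x = y") auto
  show "(x,y) \<in> r \<Longrightarrow> (y,x) \<in> r \<Longrightarrow> x = y" using l(3) unfolding antisym_def by blast
  show "(x,y) \<in> r \<Longrightarrow> (y,z) \<in> r \<Longrightarrow> (x,z) \<in> r" using l(4) unfolding trans_def by blast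
qed

lemma small_mono: "A \<subseteq> B \<Longrightarrow> |B| <o r \<Longrightarrow> |A| <o r"
  using card_of_mono1 ordLeq_ordLess_trans by blast

lemma abstract_main:
  fixes r :: "'m rel" and t :: "'c rel" and \<kappa> :: "'k rel"
    and \<phi> e :: "'c \<Rightarrow> 'm"
  assumes r: "card_order r" and t: "card_order t"
    and cof: "\<And>x. \<exists>i. (x, \<phi> i) \<in> r \<and> x \<noteq> \<phi> i"
    and bnd: "\<And>i j. (j,i) \<in> t \<Longrightarrow> (\<phi> j, e i) \<in> r"
    and k: "Card_order \<kappa>"
    and ds: "dmu_star_eq r t \<kappa>"
  shows "dmu_eq r \<kappa>"
proof -
  define H :: "'m \<Rightarrow> 'c" where "H x = (SOME i. (x, \<phi> i) \<in> r \<and> x \<noteq> \<phi> i)" for x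
  have H: "(x, \<phi> (H x)) \<in> r \<and> x \<noteq> \<phi> (H x)" for x
    unfolding H_def using someI_ex[OF cof] .
  \<comment> \<open>every dominating family yields a star-dominating one\<close>
  have part2: "\<kappa> \<le>o |D|" if D: "dominating r D" for D
  proof -
    let ?D = "(\<lambda>g. H \<circ> g) ` D"
    have "dominating_star r t ?D"
      unfolding dominating_star_def
    proof
      fix f :: "'m \<Rightarrow> 'c"
      obtain g where g: "g \<in> D" "le_star r (e \<circ> f) g"
        using D unfolding dominating_def by blast
      have "{\<beta>. (H (g \<beta>), f \<beta>) \<in> t} \<subseteq> {\<beta>. (g \<beta>, (e \<circ> f) \<beta>) \<in> r \<and> g \<beta> \<noteq> (e \<circ> f) \<beta>}"
      proof
        fix \<beta> assume "\<beta> \<in> {\<beta>. (H (g \<beta>), f \<beta>) \<in> t}"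
        hence a: "(\<phi> (H (g \<beta>)), e (f \<beta>)) \<in> r" using bnd by blast
        have b: "(g \<beta>, \<phi> (H (g \<beta>))) \<in> r" "g \<beta> \<noteq> \<phi> (H (g \<beta>))" using H by blast+
        have c: "(g \<beta>, e (f \<beta>)) \<in> r" using co_props(4)[OF r b(1) a] .
        have "g \<beta> \<noteq> e (f \<beta>)"
        proof
          assume "g \<beta> = e (f \<beta>)"
          thus False using co_props(3)[OF r b(1)] a b(2) by simp
        qed
        thus "\<beta> \<in> {\<beta>. (g \<beta>, (e \<circ> f) \<beta>) \<in> r \<and> g \<beta> \<noteq> (e \<circ> f) \<beta>}" using c by simp
      qed
      hence "less_star r t f (H \<circ> g)"
        using g(2) small_mono unfolding le_star_def less_star_def by fastforce
      thus "\<exists>g\<in>?D. less_star r t f g" using g(1) by blast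
    qed
    hence "\<kappa> \<le>o |?D|" using ds unfolding dmu_star_eq_def by blast
    thus ?thesis using card_of_image ordLeq_transitive by blast
  qed
  obtain Ds where Ds: "dominating_star r t Ds" "|Ds| =o \<kappa>"
    using ds unfolding dmu_star_eq_def by blast
  let ?D = "(\<lambda>g. e \<circ> g) ` Ds"
  have domD: "dominating r ?D"
    unfolding dominating_def
  proof
    fix f :: "'m \<Rightarrow> 'm"
    obtain g where g: "g \<in> Ds" "less_star r t (H \<circ> f) g"
      using Ds(1) unfolding dominating_star_def by blast
    have "{\<beta>. ((e \<circ> g) \<beta>, f \<beta>) \<in> r \<and> (e \<circ> g) \<beta> \<noteq> f \<beta>} \<subseteq> {\<beta>. (g \<beta>, (H \<circ> f) \<beta>) \<in> t}"
    proof
      fix \<beta> assume a: "\<beta> \<in> {\<beta>. ((e \<circ> g) \<beta>, f \<beta>) \<in> r \<and> (e \<circ> g) \<beta> \<noteq> f \<beta>}"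
      show "\<beta> \<in> {\<beta>. (g \<beta>, (H \<circ> f) \<beta>) \<in> t}"
      proof (rule ccontr)
        assume "\<beta> \<notin> {\<beta>. (g \<beta>, (H \<circ> f) \<beta>) \<in> t}"
        hence "(H (f \<beta>), g \<beta>) \<in> t" using co_props(2)[OF t, of "g \<beta>" "H (f \<beta>)"] by auto
        hence b: "(\<phi> (H (f \<beta>)), e (g \<beta>)) \<in> r" using bnd by blast
        have c: "(f \<beta>, \<phi> (H (f \<beta>))) \<in> r" "f \<beta> \<noteq> \<phi> (H (f \<beta>))" using H by blast+
        have d: "(f \<beta>, e (g \<beta>)) \<in> r" using co_props(4)[OF r c(1) b] .
        have "e (g \<beta>) = f \<beta>" using co_props(3)[OF r d] a by simp
        thus False using a by simp
      qed
    qed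
    hence "le_star r f (e \<circ> g)"
      using g(2) small_mono unfolding le_star_def less_star_def by fastforce
    thus "\<exists>g\<in>?D. le_star r f g" using g(1) by blast
  qed
  have "|?D| \<le>o \<kappa>" using card_of_image Ds(2) ordLeq_ordIso_trans by blast
  moreover have "\<kappa> \<le>o |?D|" using part2 domD by blast
  ultimately have "|?D| =o \<kappa>" using ordIso_iff_ordLeq by blast
  thus ?thesis unfolding dmu_eq_def using domD part2 by blast
qed


lemma finite_max:
  assumes r: "card_order (r :: 'a rel)" and "finite K" "K \<noteq> {}"
  shows "\<exists>m\<in>K. \<forall>k\<in>K. (k,m) \<in> r"
  using assms(2,3)
proof (induction K rule: finite_ne_induct)
  case (singleton x) thus ?case using co_props(1)[OF r] by blast
next
  case (insert x F)
  then obtain m where m: "m \<in> F" "\<forall>k\<in>F. (k,m) \<in> r" by blast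
  show ?case
  proof (cases "(x,m) \<in> r")
    case True thus ?thesis using m by blast
  next
    case False
    hence "(m,x) \<in> r" using co_props(2)[OF r] by blast
    thus ?thesis using m co_props(1,4)[OF r] by blast
  qed
qed

theorem lemma3p1:
  fixes r :: "'m rel" and t :: "'c rel" and \<kappa> :: "'k rel"
  assumes "card_order r" and "singular_card r"
    and "card_order t" and "is_cof r t"
    and "Card_order \<kappa>"
    and "dmu_star_eq r t \<kappa>"
  shows "dmu_eq r \<kappa>"
proof -
  note r = assms(1) and t = assms(3)
  have Fr: "Field r = UNIV" and Ft: "Field t = UNIV" and Ct: "Card_order t"
    using card_order_on_Card_order r t by metis+
  obtain K where K: "cofinal K r" "|K| =o t"
    using assms(4) unfolding is_cof_def by blast
  have "t =o |UNIV :: 'c set|" using card_of_Field_ordIso[OF Ct] Ft ordIso_symmetric by metis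
  hence "|K| =o |UNIV :: 'c set|" using K(2) ordIso_transitive by blast
  then obtain g where g: "bij_betw g K (UNIV :: 'c set)" using card_of_ordIso by blast
  define \<phi> where "\<phi> = inv_into K g"
  have phi: "bij_betw \<phi> UNIV K" unfolding \<phi>_def using bij_betw_inv_into[OF g] .
  have cof: "\<exists>i. (x, \<phi> i) \<in> r \<and> x \<noteq> \<phi> i" for x
  proof -
    obtain b where b: "b \<in> K" "x \<noteq> b" "(x,b) \<in> r" using K(1) Fr unfolding cofinal_def by blast
    then obtain i where "b = \<phi> i" using phi unfolding bij_betw_def by blast
    thus ?thesis using b by blast
  qed
  have inf: "infinite (UNIV :: 'c set)"
  proof
    assume "finite (UNIV :: 'c set)"
    hence fK: "finite K" using phi bij_betw_finite by blast
    have "K \<noteq> {}" using K(1) Fr unfolding cofinal_def by blast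
    then obtain m where m: "m \<in> K" "\<forall>k\<in>K. (k,m) \<in> r" using finite_max[OF r fK] by blast
    obtain b where "b \<in> K" "m \<noteq> b" "(m,b) \<in> r" using K(1) Fr unfolding cofinal_def by blast
    thus False using m co_props(3)[OF r] by blast
  qed
  have small: "|{j. (j,i) \<in> t}| <o t" for i
  proof -
    have "{j. (j,i) \<in> t} = underS t i \<union> {i}"
      using co_props(1)[OF t] unfolding underS_def by blast
    moreover have "|underS t i| <o t" using card_of_underS[OF Ct] Ft by blast
    moreover have "|{i}| <o |UNIV :: 'c set|"
      using finite_ordLess_infinite[of "|{i}|" "|UNIV :: 'c set|"] inf by (simp add: card_of_Well_order Field_card_of card_of_well_order_on)
    hence "|{i}| <o t" using card_of_Field_ordIso[OF Ct] Ft ordLess_ordIso_trans by metis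
    ultimately show ?thesis using card_of_Un_ordLess_infinite_Field[OF _ Ct] inf Ft by metis
  qed
  have bex: "\<exists>b. \<forall>j. (j,i) \<in> t \<longrightarrow> (\<phi> j, b) \<in> r" for i
  proof (rule ccontr)
    assume na: "\<not> ?thesis"
    let ?S = "\<phi> ` {j. (j,i) \<in> t}"
    have "cofinal ?S r" unfolding cofinal_def
    proof
      fix b assume "b \<in> Field r"
      obtain j where j: "(j,i) \<in> t" "(\<phi> j, b) \<notin> r" using na by blast
      hence "(b, \<phi> j) \<in> r" "b \<noteq> \<phi> j" using co_props(1,2)[OF r] by blast+
      thus "\<exists>c\<in>?S. b \<noteq> c \<and> (b,c) \<in> r" using j(1) by blast
    qed
    hence "t \<le>o |?S|" using assms(4) Fr unfolding is_cof_def by blast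
    moreover have "|?S| <o t" using card_of_image small ordLeq_ordLess_trans by blast
    ultimately show False using not_ordLess_ordLeq by blast
  qed
  define e where "e i = (SOME b. \<forall>j. (j,i) \<in> t \<longrightarrow> (\<phi> j, b) \<in> r)" for i
  have bnd: "(j,i) \<in> t \<Longrightarrow> (\<phi> j, e i) \<in> r" for i j
    unfolding e_def using someI_ex[OF bex[of i]] by blast
  show ?thesis by (rule abstract_main[where \<phi>=\<phi> and e=e, OF r t cof bnd assms(5,6)])
qed

end
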